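(* Let $R$ be a ring, $E$ a simple left $R$-module and $D$ any left $R$-module. Then $E$ (identified with $E\oplus 0$) is strongly hollow in $E\oplus D$ if and only if $E\notin\sigma[D]$.
   Context: A submodule $N$ of $M$ is strongly hollow in $M$ if for all submodules $K,L$ of $M$, $N\subseteq K+L$ implies $N\subseteq K$ or $N\subseteq L$. $\sigma[D]$ denotes the full subcategory of left $R$-modules consisting of submodules of factor modules of direct sums of copies of $D$ (for simple $E$: $E\in\sigma[D]$ iff $\mathrm{Hom}_R(E,D/A)\neq0$ for some submodule $A$ of $D$). *)

theory Defs
  imports "HOL-Algebra.Module"
begin

text \<open>Left modules over an arbitrary (not necessarily commutative) unital ring R:
  the axioms of the library locale module, but with only ring R instead of cring R.\<close>
definition left_module :: "('a, 'r) ring_scheme \<Rightarrow> ('a, 'b, 'm) module_scheme \<Rightarrow> bool" where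
  "left_module R M \<longleftrightarrow> ring R \<and> abelian_group M \<and> module_axioms R M"

definition simple_module :: "('a, 'r) ring_scheme \<Rightarrow> ('a, 'b, 'm) module_scheme \<Rightarrow> bool" where
  "simple_module R M \<longleftrightarrow> left_module R M \<and> carrier M \<noteq> {\<zero>\<^bsub>M\<^esub>} \<and>
     (\<forall>N. submodule N R M \<longrightarrow> N = {\<zero>\<^bsub>M\<^esub>} \<or> N = carrier M)"

definition submod_sum :: "('a, 'b, 'm) module_scheme \<Rightarrow> 'b set \<Rightarrow> 'b set \<Rightarrow> 'b set" where
  "submod_sum M K L = {k \<oplus>\<^bsub>M\<^esub> l | k l. k \<in> K \<and> l \<in> L}"

definition strongly_hollow ::
    "('a, 'r) ring_scheme \<Rightarrow> ('a, 'b, 'm) module_scheme \<Rightarrow> 'b set \<Rightarrow> bool" where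
  "strongly_hollow R M N \<longleftrightarrow>
     (\<forall>K L. submodule K R M \<longrightarrow> submodule L R M \<longrightarrow>
        N \<subseteq> submod_sum M K L \<longrightarrow> N \<subseteq> K \<or> N \<subseteq> L)"

text \<open>External direct sum E \<oplus> D (ring multiplication/one fields are irrelevant).\<close>
definition dsum :: "('a, 'b) module \<Rightarrow> ('a, 'c) module \<Rightarrow> ('a, 'b \<times> 'c) module" where
  "dsum E D = \<lparr>carrier = carrier E \<times> carrier D, mult = (\<lambda>_ _. undefined), one = undefined,
     zero = (\<zero>\<^bsub>E\<^esub>, \<zero>\<^bsub>D\<^esub>),
     add = (\<lambda>(a, b) (c, d). (a \<oplus>\<^bsub>E\<^esub> c, b \<oplus>\<^bsub>D\<^esub> d)),
     smult = (\<lambda>r (a, b). (r \<odot>\<^bsub>E\<^esub> a, r \<odot>\<^bsub>D\<^esub> b))\<rparr>"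

definition quot_module :: "('a, 'b) module \<Rightarrow> 'b set \<Rightarrow> ('a, 'b set) module" where
  "quot_module D A = \<lparr>carrier = {{a \<oplus>\<^bsub>D\<^esub> x | a. a \<in> A} | x. x \<in> carrier D}, mult = (\<lambda>_ _. undefined), one = undefined,
     zero = A,
     add = (\<lambda>X Y. {x \<oplus>\<^bsub>D\<^esub> y | x y. x \<in> X \<and> y \<in> Y}),
     smult = (\<lambda>r X. {a \<oplus>\<^bsub>D\<^esub> (r \<odot>\<^bsub>D\<^esub> x) | a x. a \<in> A \<and> x \<in> X})\<rparr>"

definition lin_hom :: "('a, 'r) ring_scheme \<Rightarrow> ('a, 'b) module \<Rightarrow> ('a, 'c) module \<Rightarrow> ('b \<Rightarrow> 'c) \<Rightarrow> bool" where
  "lin_hom R M N f \<longleftrightarrow> f \<in> carrier M \<rightarrow> carrier N \<and>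
     (\<forall>x\<in>carrier M. \<forall>y\<in>carrier M. f (x \<oplus>\<^bsub>M\<^esub> y) = f x \<oplus>\<^bsub>N\<^esub> f y) \<and>
     (\<forall>r\<in>carrier R. \<forall>x\<in>carrier M. f (r \<odot>\<^bsub>M\<^esub> x) = r \<odot>\<^bsub>N\<^esub> f x)"

text \<open>For simple E: E \<in> \<sigma>[D] iff Hom_R(E, D/A) \<noteq> 0 for some submodule A of D.\<close>
definition simple_in_sigma :: "('a, 'r) ring_scheme \<Rightarrow> ('a, 'c) module \<Rightarrow> ('a, 'b) module \<Rightarrow> bool" where
  "simple_in_sigma R D E \<longleftrightarrow>
     (\<exists>A f. submodule A R D \<and> lin_hom R E (quot_module D A) f \<and>
        (\<exists>x\<in>carrier E. f x \<noteq> \<zero>\<^bsub>quot_module D A\<^esub>))"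

end

theory Submission
  imports Defs
begin


locale lmod = R?: ring + M?: abelian_group M for M (structure) +
  assumes smult_closed [simp, intro]:
      "[| a \<in> carrier R; x \<in> carrier M |] ==> a \<odot>\<^bsub>M\<^esub> x \<in> carrier M"
    and smult_l_distr:
      "[| a \<in> carrier R; b \<in> carrier R; x \<in> carrier M |] ==>
      (a \<oplus> b) \<odot>\<^bsub>M\<^esub> x = a \<odot>\<^bsub>M\<^esub> x \<oplus>\<^bsub>M\<^esub> b \<odot>\<^bsub>M\<^esub> x"
    and smult_r_distr:
      "[| a \<in> carrier R; x \<in> carrier M; y \<in> carrier M |] ==>
      a \<odot>\<^bsub>M\<^esub> (x \<oplus>\<^bsub>M\<^esub> y) = a \<odot>\<^bsub>M\<^esub> x \<oplus>\<^bsub>M\<^esub> a \<odot>\<^bsub>M\<^esub> y"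
    and smult_assoc1:
      "[| a \<in> carrier R; b \<in> carrier R; x \<in> carrier M |] ==>
      (a \<otimes> b) \<odot>\<^bsub>M\<^esub> x = a \<odot>\<^bsub>M\<^esub> (b \<odot>\<^bsub>M\<^esub> x)"
    and smult_one [simp]:
      "x \<in> carrier M ==> \<one> \<odot>\<^bsub>M\<^esub> x = x"

lemma left_module_lmod: "left_module R M \<Longrightarrow> lmod R M"
  unfolding left_module_def module_axioms_def lmod_def lmod_axioms_def by auto

lemma (in lmod) smult_l_null [simp]:
 "x \<in> carrier M ==> \<zero> \<odot>\<^bsub>M\<^esub> x = \<zero>\<^bsub>M\<^esub>"
proof-
  assume M : "x \<in> carrier M"
  note facts = M smult_closed [OF R.zero_closed]
  from facts have "\<zero> \<odot>\<^bsub>M\<^esub> x = (\<zero> \<oplus> \<zero>) \<odot>\<^bsub>M\<^esub> x "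
    using smult_l_distr by auto
  also have "... = \<zero> \<odot>\<^bsub>M\<^esub> x \<oplus>\<^bsub>M\<^esub> \<zero> \<odot>\<^bsub>M\<^esub> x"
    using smult_l_distr[of \<zero> \<zero> x] facts by auto
  finally show "\<zero> \<odot>\<^bsub>M\<^esub> x = \<zero>\<^bsub>M\<^esub>" using facts
    by (metis M.add.r_cancel_one')
qed

lemma (in lmod) smult_r_null [simp]:
  "a \<in> carrier R ==> a \<odot>\<^bsub>M\<^esub> \<zero>\<^bsub>M\<^esub> = \<zero>\<^bsub>M\<^esub>"
proof -
  assume R: "a \<in> carrier R"
  note facts = R smult_closed
  from facts have "a \<odot>\<^bsub>M\<^esub> \<zero>\<^bsub>M\<^esub> = (a \<odot>\<^bsub>M\<^esub> \<zero>\<^bsub>M\<^esub> \<oplus>\<^bsub>M\<^esub> a \<odot>\<^bsub>M\<^esub> \<zero>\<^bsub>M\<^esub>) \<oplus>\<^bsub>M\<^esub> \<ominus>\<^bsub>M\<^esub> (a \<odot>\<^bsub>M\<^esub> \<zero>\<^bsub>M\<^esub>)"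
    by (simp add: M.add.inv_solve_right)
  also from R have "... = a \<odot>\<^bsub>M\<^esub> (\<zero>\<^bsub>M\<^esub> \<oplus>\<^bsub>M\<^esub> \<zero>\<^bsub>M\<^esub>) \<oplus>\<^bsub>M\<^esub> \<ominus>\<^bsub>M\<^esub> (a \<odot>\<^bsub>M\<^esub> \<zero>\<^bsub>M\<^esub>)"
    by (simp add: smult_r_distr del: M.l_zero M.r_zero)
  also from facts have "... = \<zero>\<^bsub>M\<^esub>"
    by (simp add: M.r_neg)
  finally show ?thesis .
qed

lemma (in lmod) smult_r_minus:
  "\<lbrakk> a \<in> carrier R; x \<in> carrier M \<rbrakk> \<Longrightarrow> a \<odot>\<^bsub>M\<^esub> (\<ominus>\<^bsub>M\<^esub> x) = \<ominus>\<^bsub>M\<^esub> (a \<odot>\<^bsub>M\<^esub> x)"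
proof -
  assume RM: "a \<in> carrier R" "x \<in> carrier M"
  have "a \<odot>\<^bsub>M\<^esub> (\<ominus>\<^bsub>M\<^esub> x) \<oplus>\<^bsub>M\<^esub> a \<odot>\<^bsub>M\<^esub> x = \<zero>\<^bsub>M\<^esub>"
    using RM by (simp add: smult_r_distr[symmetric] M.l_neg)
  thus ?thesis using RM by (metis M.minus_equality M.a_inv_closed smult_closed)
qed

lemma (in lmod) smult_minus_one:
  "x \<in> carrier M \<Longrightarrow> (\<ominus> \<one>) \<odot>\<^bsub>M\<^esub> x = \<ominus>\<^bsub>M\<^esub> x"
proof -
  assume x: "x \<in> carrier M"
  have "(\<ominus> \<one>) \<odot>\<^bsub>M\<^esub> x \<oplus>\<^bsub>M\<^esub> x = \<zero>\<^bsub>M\<^esub>"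
    using x smult_l_distr[of "\<ominus> \<one>" "\<one>" x] by (simp add: R.l_neg)
  thus ?thesis using x by (metis M.minus_equality R.a_inv_closed R.one_closed smult_closed)
qed

lemma submodule_iff:
  "submodule H R M \<longleftrightarrow> H \<subseteq> carrier M \<and> \<zero>\<^bsub>M\<^esub> \<in> H \<and> (\<forall>a\<in>H. \<ominus>\<^bsub>M\<^esub> a \<in> H)
     \<and> (\<forall>a\<in>H. \<forall>b\<in>H. a \<oplus>\<^bsub>M\<^esub> b \<in> H) \<and> (\<forall>r\<in>carrier R. \<forall>x\<in>H. r \<odot>\<^bsub>M\<^esub> x \<in> H)"
  unfolding submodule_def subgroup_def submodule_axioms_def a_inv_def
  by auto



definition cos :: "('a,'b,'m) module_scheme \<Rightarrow> 'b set \<Rightarrow> 'b \<Rightarrow> 'b set" where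
  "cos M A x = {a \<oplus>\<^bsub>M\<^esub> x | a. a \<in> A}"

lemma quot_carrier: "carrier (quot_module D A) = cos D A ` carrier D"
  by (auto simp: quot_module_def cos_def)
lemma quot_zero: "\<zero>\<^bsub>quot_module D A\<^esub> = A"
  by (simp add: quot_module_def)
lemma quot_add: "X \<oplus>\<^bsub>quot_module D A\<^esub> Y = {x \<oplus>\<^bsub>D\<^esub> y | x y. x \<in> X \<and> y \<in> Y}"
  by (simp add: quot_module_def)
lemma quot_smult: "r \<odot>\<^bsub>quot_module D A\<^esub> X = {a \<oplus>\<^bsub>D\<^esub> (r \<odot>\<^bsub>D\<^esub> x) | a x. a \<in> A \<and> x \<in> X}"
  by (simp add: quot_module_def)

context lmod
begin

lemma mem_cos:
  assumes A: "submodule A R M" and x: "x \<in> carrier M"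
  shows "y \<in> cos M A x \<longleftrightarrow> y \<in> carrier M \<and> y \<ominus>\<^bsub>M\<^esub> x \<in> A"
proof -
  have As: "A \<subseteq> carrier M" using A by (simp add: submodule_iff)
  show ?thesis
  proof
    assume "y \<in> cos M A x"
    then obtain a where a: "a \<in> A" "y = a \<oplus>\<^bsub>M\<^esub> x" by (auto simp: cos_def)
    have ac: "a \<in> carrier M" using a As by auto
    have "y \<ominus>\<^bsub>M\<^esub> x = a" using a ac x by (simp add: a_minus_def M.add.m_assoc M.r_neg)
    thus "y \<in> carrier M \<and> y \<ominus>\<^bsub>M\<^esub> x \<in> A" using a ac x by auto
  next
    assume h: "y \<in> carrier M \<and> y \<ominus>\<^bsub>M\<^esub> x \<in> A"
    have "(y \<ominus>\<^bsub>M\<^esub> x) \<oplus>\<^bsub>M\<^esub> x = y" using h x by (simp add: a_minus_def M.add.m_assoc M.l_neg)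
    thus "y \<in> cos M A x" using h unfolding cos_def by (metis (mono_tags, lifting) mem_Collect_eq)
  qed
qed

lemma cos_self:
  assumes A: "submodule A R M" and x: "x \<in> carrier M"
  shows "x \<in> cos M A x"
  using assms by (simp add: mem_cos submodule_iff M.r_neg a_minus_def)

lemma cos_zero:
  assumes A: "submodule A R M"
  shows "cos M A \<zero>\<^bsub>M\<^esub> = A"
proof -
  have As: "A \<subseteq> carrier M" using A by (simp add: submodule_iff)
  show ?thesis using As by (auto simp: cos_def) (metis M.r_zero subsetD)
qed

lemma cos_eq:
  assumes A: "submodule A R M" and x: "x \<in> carrier M" and y: "y \<in> carrier M"
  shows "cos M A x = cos M A y \<longleftrightarrow> x \<ominus>\<^bsub>M\<^esub> y \<in> A"
proof
  assume "cos M A x = cos M A y"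
  then have "x \<in> cos M A y" using cos_self[OF A x] by simp
  thus "x \<ominus>\<^bsub>M\<^esub> y \<in> A" using mem_cos[OF A y] by simp
next
  assume h: "x \<ominus>\<^bsub>M\<^esub> y \<in> A"
  have Ap: "\<forall>a\<in>A. \<forall>b\<in>A. a \<oplus>\<^bsub>M\<^esub> b \<in> A" "\<forall>a\<in>A. \<ominus>\<^bsub>M\<^esub> a \<in> A" "A \<subseteq> carrier M"
    using A by (simp_all add: submodule_iff)
  show "cos M A x = cos M A y"
  proof (rule Set.set_eqI)
    fix z
    show "z \<in> cos M A x \<longleftrightarrow> z \<in> cos M A y"
    proof (cases "z \<in> carrier M")
      case True
      have e1: "z \<ominus>\<^bsub>M\<^esub> y = (z \<ominus>\<^bsub>M\<^esub> x) \<oplus>\<^bsub>M\<^esub> (x \<ominus>\<^bsub>M\<^esub> y)"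
        using True x y by (simp add: a_minus_def M.add.m_assoc M.l_neg M.r_neg1 M.r_neg2)
      have e2: "z \<ominus>\<^bsub>M\<^esub> x = (z \<ominus>\<^bsub>M\<^esub> y) \<oplus>\<^bsub>M\<^esub> \<ominus>\<^bsub>M\<^esub> (x \<ominus>\<^bsub>M\<^esub> y)"
      proof -
        have "(z \<ominus>\<^bsub>M\<^esub> y) \<oplus>\<^bsub>M\<^esub> \<ominus>\<^bsub>M\<^esub> (x \<ominus>\<^bsub>M\<^esub> y) = (z \<oplus>\<^bsub>M\<^esub> \<ominus>\<^bsub>M\<^esub> x) \<oplus>\<^bsub>M\<^esub> (y \<oplus>\<^bsub>M\<^esub> \<ominus>\<^bsub>M\<^esub> y)"
          using True x y by (simp add: a_minus_def M.minus_add M.minus_minus M.a_ac)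
        thus ?thesis using True x y by (simp add: M.r_neg a_minus_def)
      qed
      show ?thesis using True h Ap e1 e2 mem_cos[OF A x] mem_cos[OF A y] by metis
    next
      case False
      then show ?thesis using mem_cos[OF A x] mem_cos[OF A y] by simp
    qed
  qed
qed

lemma cos_add:
  assumes A: "submodule A R M" and x: "x \<in> carrier M" and y: "y \<in> carrier M"
  shows "{u \<oplus>\<^bsub>M\<^esub> v | u v. u \<in> cos M A x \<and> v \<in> cos M A y} = cos M A (x \<oplus>\<^bsub>M\<^esub> y)"
proof -
  have Ap: "\<forall>a\<in>A. \<forall>b\<in>A. a \<oplus>\<^bsub>M\<^esub> b \<in> A" "\<zero>\<^bsub>M\<^esub> \<in> A" "A \<subseteq> carrier M"
    using A by (simp_all add: submodule_iff)
  show ?thesis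
  proof (rule Set.set_eqI, rule iffI)
    fix z assume "z \<in> {u \<oplus>\<^bsub>M\<^esub> v | u v. u \<in> cos M A x \<and> v \<in> cos M A y}"
    then obtain a b where ab: "a \<in> A" "b \<in> A" "z = (a \<oplus>\<^bsub>M\<^esub> x) \<oplus>\<^bsub>M\<^esub> (b \<oplus>\<^bsub>M\<^esub> y)"
      by (auto simp: cos_def)
    have "z = (a \<oplus>\<^bsub>M\<^esub> b) \<oplus>\<^bsub>M\<^esub> (x \<oplus>\<^bsub>M\<^esub> y)"
      using ab Ap x y by (simp add: subsetD M.a_ac)
    thus "z \<in> cos M A (x \<oplus>\<^bsub>M\<^esub> y)" using ab Ap unfolding cos_def by blast
  next
    fix z assume "z \<in> cos M A (x \<oplus>\<^bsub>M\<^esub> y)"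
    then obtain a where a: "a \<in> A" "z = a \<oplus>\<^bsub>M\<^esub> (x \<oplus>\<^bsub>M\<^esub> y)" by (auto simp: cos_def)
    have "z = (a \<oplus>\<^bsub>M\<^esub> x) \<oplus>\<^bsub>M\<^esub> (\<zero>\<^bsub>M\<^esub> \<oplus>\<^bsub>M\<^esub> y)"
      using a Ap x y by (simp add: subsetD M.a_ac)
    moreover have "a \<oplus>\<^bsub>M\<^esub> x \<in> cos M A x" "\<zero>\<^bsub>M\<^esub> \<oplus>\<^bsub>M\<^esub> y \<in> cos M A y"
      using a Ap unfolding cos_def by blast+
    ultimately show "z \<in> {u \<oplus>\<^bsub>M\<^esub> v | u v. u \<in> cos M A x \<and> v \<in> cos M A y}" by blast
  qed
qed

lemma cos_smult:
  assumes A: "submodule A R M" and x: "x \<in> carrier M" and r: "r \<in> carrier R"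
  shows "{a \<oplus>\<^bsub>M\<^esub> (r \<odot>\<^bsub>M\<^esub> u) | a u. a \<in> A \<and> u \<in> cos M A x} = cos M A (r \<odot>\<^bsub>M\<^esub> x)"
proof -
  have Ap: "\<forall>a\<in>A. \<forall>b\<in>A. a \<oplus>\<^bsub>M\<^esub> b \<in> A" "\<zero>\<^bsub>M\<^esub> \<in> A" "A \<subseteq> carrier M"
     "\<forall>r\<in>carrier R. \<forall>x\<in>A. r \<odot>\<^bsub>M\<^esub> x \<in> A"
    using A by (simp_all add: submodule_iff)
  show ?thesis
  proof (rule Set.set_eqI, rule iffI)
    fix z assume "z \<in> {a \<oplus>\<^bsub>M\<^esub> (r \<odot>\<^bsub>M\<^esub> u) | a u. a \<in> A \<and> u \<in> cos M A x}"
    then obtain a b where ab: "a \<in> A" "b \<in> A" "z = a \<oplus>\<^bsub>M\<^esub> (r \<odot>\<^bsub>M\<^esub> (b \<oplus>\<^bsub>M\<^esub> x))"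
      by (auto simp: cos_def)
    have bc: "b \<in> carrier M" "a \<in> carrier M" using ab Ap by auto
    have "z = (a \<oplus>\<^bsub>M\<^esub> (r \<odot>\<^bsub>M\<^esub> b)) \<oplus>\<^bsub>M\<^esub> (r \<odot>\<^bsub>M\<^esub> x)"
      using ab bc x r by (simp add: smult_r_distr M.a_ac)
    moreover have "a \<oplus>\<^bsub>M\<^esub> (r \<odot>\<^bsub>M\<^esub> b) \<in> A" using ab Ap r by auto
    ultimately show "z \<in> cos M A (r \<odot>\<^bsub>M\<^esub> x)" unfolding cos_def by blast
  next
    fix z assume "z \<in> cos M A (r \<odot>\<^bsub>M\<^esub> x)"
    then obtain a where a: "a \<in> A" "z = a \<oplus>\<^bsub>M\<^esub> (r \<odot>\<^bsub>M\<^esub> x)" by (auto simp: cos_def)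
    have "x \<in> cos M A x" by (rule cos_self[OF A x])
    thus "z \<in> {a \<oplus>\<^bsub>M\<^esub> (r \<odot>\<^bsub>M\<^esub> u) | a u. a \<in> A \<and> u \<in> cos M A x}" using a by blast
  qed
qed

end

lemma dsum_carrier: "carrier (dsum E D) = carrier E \<times> carrier D"
  by (simp add: dsum_def)
lemma dsum_zero: "\<zero>\<^bsub>dsum E D\<^esub> = (\<zero>\<^bsub>E\<^esub>, \<zero>\<^bsub>D\<^esub>)"
  by (simp add: dsum_def)
lemma dsum_add: "(a, b) \<oplus>\<^bsub>dsum E D\<^esub> (c, d) = (a \<oplus>\<^bsub>E\<^esub> c, b \<oplus>\<^bsub>D\<^esub> d)"
  by (simp add: dsum_def)
lemma dsum_smult: "r \<odot>\<^bsub>dsum E D\<^esub> (a, b) = (r \<odot>\<^bsub>E\<^esub> a, r \<odot>\<^bsub>D\<^esub> b)"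
  by (simp add: dsum_def)

lemma dsum_abelian:
  assumes E: "abelian_group E" and D: "abelian_group D"
  shows "abelian_group (dsum E D)"
proof (rule abelian_groupI)
  interpret E: abelian_group E by (rule E)
  interpret D: abelian_group D by (rule D)
  show "\<And>x y. x \<in> carrier (dsum E D) \<Longrightarrow> y \<in> carrier (dsum E D) \<Longrightarrow> x \<oplus>\<^bsub>dsum E D\<^esub> y \<in> carrier (dsum E D)"
    by (auto simp: dsum_carrier dsum_add)
  show "\<zero>\<^bsub>dsum E D\<^esub> \<in> carrier (dsum E D)" by (simp add: dsum_carrier dsum_zero)
  show "\<And>x y z. x \<in> carrier (dsum E D) \<Longrightarrow> y \<in> carrier (dsum E D) \<Longrightarrow> z \<in> carrier (dsum E D) \<Longrightarrow>
      x \<oplus>\<^bsub>dsum E D\<^esub> y \<oplus>\<^bsub>dsum E D\<^esub> z = x \<oplus>\<^bsub>dsum E D\<^esub> (y \<oplus>\<^bsub>dsum E D\<^esub> z)"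
    by (auto simp: dsum_carrier dsum_add E.a_ac D.a_ac)
  show "\<And>x y. x \<in> carrier (dsum E D) \<Longrightarrow> y \<in> carrier (dsum E D) \<Longrightarrow> x \<oplus>\<^bsub>dsum E D\<^esub> y = y \<oplus>\<^bsub>dsum E D\<^esub> x"
    by (auto simp: dsum_carrier dsum_add E.a_ac D.a_ac)
  show "\<And>x. x \<in> carrier (dsum E D) \<Longrightarrow> \<zero>\<^bsub>dsum E D\<^esub> \<oplus>\<^bsub>dsum E D\<^esub> x = x"
    by (auto simp: dsum_carrier dsum_add dsum_zero)
  show "\<And>x. x \<in> carrier (dsum E D) \<Longrightarrow> \<exists>y\<in>carrier (dsum E D). y \<oplus>\<^bsub>dsum E D\<^esub> x = \<zero>\<^bsub>dsum E D\<^esub>"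
  proof -
    fix x assume "x \<in> carrier (dsum E D)"
    then obtain a b where "x = (a, b)" "a \<in> carrier E" "b \<in> carrier D" by (auto simp: dsum_carrier)
    then show "\<exists>y\<in>carrier (dsum E D). y \<oplus>\<^bsub>dsum E D\<^esub> x = \<zero>\<^bsub>dsum E D\<^esub>"
      by (intro bexI[of _ "(\<ominus>\<^bsub>E\<^esub> a, \<ominus>\<^bsub>D\<^esub> b)"]) (auto simp: dsum_carrier dsum_add dsum_zero E.l_neg D.l_neg)
  qed
qed

lemma dsum_inv:
  assumes E: "abelian_group E" and D: "abelian_group D" and a: "a \<in> carrier E" and b: "b \<in> carrier D"
  shows "\<ominus>\<^bsub>dsum E D\<^esub> (a, b) = (\<ominus>\<^bsub>E\<^esub> a, \<ominus>\<^bsub>D\<^esub> b)"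
proof -
  interpret E: abelian_group E by (rule E)
  interpret D: abelian_group D by (rule D)
  interpret M: abelian_group "dsum E D" by (rule dsum_abelian[OF E D])
  show ?thesis
    by (rule M.minus_equality) (auto simp: a b dsum_carrier dsum_add dsum_zero E.l_neg D.l_neg)
qed

lemma dsum_minus:
  assumes E: "abelian_group E" and D: "abelian_group D" and a: "a \<in> carrier E" and b: "b \<in> carrier D"
     and c: "c \<in> carrier E" and d: "d \<in> carrier D"
  shows "(a, b) \<ominus>\<^bsub>dsum E D\<^esub> (c, d) = (a \<ominus>\<^bsub>E\<^esub> c, b \<ominus>\<^bsub>D\<^esub> d)"
  using assms by (simp add: a_minus_def dsum_inv dsum_add)



lemma dsum_add': "m \<oplus>\<^bsub>dsum E D\<^esub> l = (fst m \<oplus>\<^bsub>E\<^esub> fst l, snd m \<oplus>\<^bsub>D\<^esub> snd l)"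
  by (cases m, cases l) (simp add: dsum_add)
lemma dsum_smult': "r \<odot>\<^bsub>dsum E D\<^esub> m = (r \<odot>\<^bsub>E\<^esub> fst m, r \<odot>\<^bsub>D\<^esub> snd m)"
  by (cases m) (simp add: dsum_smult)
lemma dsum_inv':
  assumes "abelian_group E" "abelian_group D" "m \<in> carrier (dsum E D)"
  shows "\<ominus>\<^bsub>dsum E D\<^esub> m = (\<ominus>\<^bsub>E\<^esub> fst m, \<ominus>\<^bsub>D\<^esub> snd m)"
  using assms by (cases m) (simp add: dsum_inv dsum_carrier)

locale two = E: lmod R E + D: lmod R D for R :: "('a,'r) ring_scheme" and E :: "('a,'b) module" and D :: "('a,'c) module"

context two
begin

lemma sigma_not_sh:
  assumes A: "submodule A R D" and f: "lin_hom R E (quot_module D A) f"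
    and x0: "x0 \<in> carrier E" and fx0: "f x0 \<noteq> A"
  shows "\<not> strongly_hollow R (dsum E D) ((\<lambda>x. (x, \<zero>\<^bsub>D\<^esub>)) ` carrier E)"
proof -
  have Ap: "A \<subseteq> carrier D" "\<zero>\<^bsub>D\<^esub> \<in> A" "\<forall>a\<in>A. \<ominus>\<^bsub>D\<^esub> a \<in> A"
    using A by (simp_all add: submodule_iff)
  have fc: "\<And>x. x \<in> carrier E \<Longrightarrow> \<exists>c\<in>carrier D. f x = cos D A c"
    using f unfolding lin_hom_def quot_carrier by blast
  have fsub: "\<And>x. x \<in> carrier E \<Longrightarrow> f x \<subseteq> carrier D"
    using fc D.mem_cos[OF A] by blast
  have fadd: "\<And>x y d e. x \<in> carrier E \<Longrightarrow> y \<in> carrier E \<Longrightarrow> d \<in> f x \<Longrightarrow> e \<in> f y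
      \<Longrightarrow> d \<oplus>\<^bsub>D\<^esub> e \<in> f (x \<oplus>\<^bsub>E\<^esub> y)"
    using f unfolding lin_hom_def quot_add by blast
  have fsm: "\<And>x r d. x \<in> carrier E \<Longrightarrow> r \<in> carrier R \<Longrightarrow> d \<in> f x
      \<Longrightarrow> r \<odot>\<^bsub>D\<^esub> d \<in> f (r \<odot>\<^bsub>E\<^esub> x)"
  proof -
    fix x r d assume h: "x \<in> carrier E" "r \<in> carrier R" "d \<in> f x"
    have dc: "d \<in> carrier D" using h fsub by blast
    have "f (r \<odot>\<^bsub>E\<^esub> x) = {a \<oplus>\<^bsub>D\<^esub> (r \<odot>\<^bsub>D\<^esub> u) | a u. a \<in> A \<and> u \<in> f x}"
      using f h unfolding lin_hom_def quot_smult by blast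
    moreover have "r \<odot>\<^bsub>D\<^esub> d = \<zero>\<^bsub>D\<^esub> \<oplus>\<^bsub>D\<^esub> (r \<odot>\<^bsub>D\<^esub> d)" using dc h by simp
    ultimately show "r \<odot>\<^bsub>D\<^esub> d \<in> f (r \<odot>\<^bsub>E\<^esub> x)" using h Ap by blast
  qed
  have zero_in: "\<And>x. x \<in> carrier E \<Longrightarrow> \<zero>\<^bsub>D\<^esub> \<in> f x \<Longrightarrow> f x = A"
  proof -
    fix x assume h: "x \<in> carrier E" "\<zero>\<^bsub>D\<^esub> \<in> f x"
    obtain c where c: "c \<in> carrier D" "f x = cos D A c" using fc h by blast
    have "\<zero>\<^bsub>D\<^esub> \<ominus>\<^bsub>D\<^esub> c \<in> A" using h c D.mem_cos[OF A] by blast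
    hence "cos D A \<zero>\<^bsub>D\<^esub> = cos D A c" using D.cos_eq[OF A D.zero_closed c(1)] by simp
    thus "f x = A" using c D.cos_zero[OF A] by simp
  qed
  have self: "\<And>x. x \<in> carrier E \<Longrightarrow> \<exists>c\<in>carrier D. c \<in> f x"
    using fc D.cos_self[OF A] by blast
  have f0: "\<zero>\<^bsub>D\<^esub> \<in> f \<zero>\<^bsub>E\<^esub>"
  proof -
    obtain c where c: "c \<in> carrier D" "c \<in> f x0" using self x0 by blast
    have "\<zero>\<^bsub>R\<^esub> \<odot>\<^bsub>D\<^esub> c \<in> f (\<zero>\<^bsub>R\<^esub> \<odot>\<^bsub>E\<^esub> x0)" by (rule fsm[OF x0 _ c(2)]) simp
    thus ?thesis using c x0 by simp
  qed
  have x0nz: "x0 \<noteq> \<zero>\<^bsub>E\<^esub>" using zero_in f0 fx0 by auto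
  define K where "K = {(x, d). x \<in> carrier E \<and> d \<in> carrier D \<and> d \<in> f x}"
  define L where "L = {(z, d). z = \<zero>\<^bsub>E\<^esub> \<and> d \<in> carrier D}"
  have EA: "abelian_group E" "abelian_group D" by unfold_locales
  have Ksub: "submodule K R (dsum E D)"
    unfolding submodule_iff
  proof (intro conjI ballI)
    show "K \<subseteq> carrier (dsum E D)" by (auto simp: K_def dsum_carrier)
    show "\<zero>\<^bsub>dsum E D\<^esub> \<in> K" using f0 by (simp add: K_def dsum_zero)
  next
    fix a assume a: "a \<in> K"
    then obtain x d where xd: "a = (x, d)" "x \<in> carrier E" "d \<in> carrier D" "d \<in> f x"
      by (auto simp: K_def)
    have "(\<ominus>\<^bsub>R\<^esub> \<one>\<^bsub>R\<^esub>) \<odot>\<^bsub>D\<^esub> d \<in> f ((\<ominus>\<^bsub>R\<^esub> \<one>\<^bsub>R\<^esub>) \<odot>\<^bsub>E\<^esub> x)"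
      using fsm xd by simp
    thus "\<ominus>\<^bsub>dsum E D\<^esub> a \<in> K" using xd
      by (simp add: dsum_inv[OF EA] K_def E.smult_minus_one D.smult_minus_one)
  next
    fix a b assume a: "a \<in> K" and b: "b \<in> K"
    then show "a \<oplus>\<^bsub>dsum E D\<^esub> b \<in> K" using fadd
      by (auto simp: K_def dsum_add)
  next
    fix r a assume r: "r \<in> carrier R" and a: "a \<in> K"
    then show "r \<odot>\<^bsub>dsum E D\<^esub> a \<in> K" using fsm
      by (auto simp: K_def dsum_smult)
  qed
  have Lsub: "submodule L R (dsum E D)"
    unfolding submodule_iff
    by (auto simp: L_def dsum_carrier dsum_zero dsum_add dsum_smult dsum_inv[OF EA])
  have cover: "(\<lambda>x. (x, \<zero>\<^bsub>D\<^esub>)) ` carrier E \<subseteq> submod_sum (dsum E D) K L"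
  proof
    fix p assume "p \<in> (\<lambda>x. (x, \<zero>\<^bsub>D\<^esub>)) ` carrier E"
    then obtain x where x: "x \<in> carrier E" "p = (x, \<zero>\<^bsub>D\<^esub>)" by blast
    obtain c where c: "c \<in> carrier D" "c \<in> f x" using self x by blast
    have "p = (x, c) \<oplus>\<^bsub>dsum E D\<^esub> (\<zero>\<^bsub>E\<^esub>, \<ominus>\<^bsub>D\<^esub> c)"
      using x c by (simp add: dsum_add D.r_neg)
    moreover have "(x, c) \<in> K" "(\<zero>\<^bsub>E\<^esub>, \<ominus>\<^bsub>D\<^esub> c) \<in> L" using x c by (auto simp: K_def L_def)
    ultimately show "p \<in> submod_sum (dsum E D) K L" unfolding submod_sum_def by blast
  qed
  have nK: "\<not> (\<lambda>x. (x, \<zero>\<^bsub>D\<^esub>)) ` carrier E \<subseteq> K"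
  proof
    assume "(\<lambda>x. (x, \<zero>\<^bsub>D\<^esub>)) ` carrier E \<subseteq> K"
    hence "(x0, \<zero>\<^bsub>D\<^esub>) \<in> K" using x0 by blast
    hence "\<zero>\<^bsub>D\<^esub> \<in> f x0" by (simp add: K_def)
    thus False using zero_in x0 fx0 by blast
  qed
  have nL: "\<not> (\<lambda>x. (x, \<zero>\<^bsub>D\<^esub>)) ` carrier E \<subseteq> L"
  proof
    assume "(\<lambda>x. (x, \<zero>\<^bsub>D\<^esub>)) ` carrier E \<subseteq> L"
    hence "(x0, \<zero>\<^bsub>D\<^esub>) \<in> L" using x0 by blast
    thus False using x0nz by (simp add: L_def)
  qed
  show ?thesis unfolding strongly_hollow_def using Ksub Lsub cover nK nL by blast
qed

end


context two
begin

lemma not_sh_sigma: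
  assumes simp1: "carrier E \<noteq> {\<zero>\<^bsub>E\<^esub>}"
    and simp2: "\<forall>N. submodule N R E \<longrightarrow> N = {\<zero>\<^bsub>E\<^esub>} \<or> N = carrier E"
    and nsh: "\<not> strongly_hollow R (dsum E D) ((\<lambda>x. (x, \<zero>\<^bsub>D\<^esub>)) ` carrier E)"
  shows "simple_in_sigma R D E"
proof -
  have EA: "abelian_group E" "abelian_group D" by unfold_locales
  interpret M: abelian_group "dsum E D" by (rule dsum_abelian[OF EA])
  obtain K L where K: "submodule K R (dsum E D)" and L: "submodule L R (dsum E D)"
    and cover: "(\<lambda>x. (x, \<zero>\<^bsub>D\<^esub>)) ` carrier E \<subseteq> submod_sum (dsum E D) K L"
    and nK: "\<not> (\<lambda>x. (x, \<zero>\<^bsub>D\<^esub>)) ` carrier E \<subseteq> K"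
    and nL: "\<not> (\<lambda>x. (x, \<zero>\<^bsub>D\<^esub>)) ` carrier E \<subseteq> L"
    using nsh unfolding strongly_hollow_def by blast
  have Kp: "K \<subseteq> carrier (dsum E D)" "\<zero>\<^bsub>dsum E D\<^esub> \<in> K" "\<forall>a\<in>K. \<ominus>\<^bsub>dsum E D\<^esub> a \<in> K"
     "\<forall>a\<in>K. \<forall>b\<in>K. a \<oplus>\<^bsub>dsum E D\<^esub> b \<in> K" "\<forall>r\<in>carrier R. \<forall>x\<in>K. r \<odot>\<^bsub>dsum E D\<^esub> x \<in> K"
    using K by (simp_all add: submodule_iff)
  have Lp: "L \<subseteq> carrier (dsum E D)" "\<zero>\<^bsub>dsum E D\<^esub> \<in> L" "\<forall>a\<in>L. \<ominus>\<^bsub>dsum E D\<^esub> a \<in> L"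
     "\<forall>a\<in>L. \<forall>b\<in>L. a \<oplus>\<^bsub>dsum E D\<^esub> b \<in> L" "\<forall>r\<in>carrier R. \<forall>x\<in>L. r \<odot>\<^bsub>dsum E D\<^esub> x \<in> L"
    using L by (simp_all add: submodule_iff)
  have msub: "\<And>a b. a \<in> L \<Longrightarrow> b \<in> L \<Longrightarrow> a \<ominus>\<^bsub>dsum E D\<^esub> b \<in> L"
    using Lp by (simp add: a_minus_def)
  have msubK: "\<And>a b. a \<in> K \<Longrightarrow> b \<in> K \<Longrightarrow> a \<ominus>\<^bsub>dsum E D\<^esub> b \<in> K"
    using Kp by (simp add: a_minus_def)
  have triv: "\<And>H. submodule H R (dsum E D) \<Longrightarrow> \<not> (\<lambda>x. (x, \<zero>\<^bsub>D\<^esub>)) ` carrier E \<subseteq> H \<Longrightarrow>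
      \<forall>x\<in>carrier E. (x, \<zero>\<^bsub>D\<^esub>) \<in> H \<longrightarrow> x = \<zero>\<^bsub>E\<^esub>"
  proof -
    fix H assume H: "submodule H R (dsum E D)" and nH: "\<not> (\<lambda>x. (x, \<zero>\<^bsub>D\<^esub>)) ` carrier E \<subseteq> H"
    have Hp: "H \<subseteq> carrier (dsum E D)" "\<zero>\<^bsub>dsum E D\<^esub> \<in> H" "\<forall>a\<in>H. \<ominus>\<^bsub>dsum E D\<^esub> a \<in> H"
       "\<forall>a\<in>H. \<forall>b\<in>H. a \<oplus>\<^bsub>dsum E D\<^esub> b \<in> H" "\<forall>r\<in>carrier R. \<forall>x\<in>H. r \<odot>\<^bsub>dsum E D\<^esub> x \<in> H"
      using H by (simp_all add: submodule_iff)
    define S where "S = {x \<in> carrier E. (x, \<zero>\<^bsub>D\<^esub>) \<in> H}"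
    have "submodule S R E"
      unfolding submodule_iff
    proof (intro conjI ballI)
      show "S \<subseteq> carrier E" by (auto simp: S_def)
      show "\<zero>\<^bsub>E\<^esub> \<in> S" using Hp by (simp add: S_def dsum_zero)
    next
      fix a assume "a \<in> S"
      then show "\<ominus>\<^bsub>E\<^esub> a \<in> S" using Hp(3) dsum_inv[OF EA, of a "\<zero>\<^bsub>D\<^esub>"]
        using D.minus_equality[of "\<zero>\<^bsub>D\<^esub>" "\<zero>\<^bsub>D\<^esub>"] by (auto simp: S_def)
    next
      fix a b assume "a \<in> S" "b \<in> S"
      then show "a \<oplus>\<^bsub>E\<^esub> b \<in> S" using Hp(4) by (force simp: S_def dsum_add)
    next
      fix r a assume "r \<in> carrier R" "a \<in> S"
      then show "r \<odot>\<^bsub>E\<^esub> a \<in> S" using Hp(5) by (force simp: S_def dsum_smult)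
    qed
    moreover have "S \<noteq> carrier E" using nH by (auto simp: S_def)
    ultimately have "S = {\<zero>\<^bsub>E\<^esub>}" using simp2 by blast
    thus "\<forall>x\<in>carrier E. (x, \<zero>\<^bsub>D\<^esub>) \<in> H \<longrightarrow> x = \<zero>\<^bsub>E\<^esub>" by (auto simp: S_def)
  qed
  have trK: "\<And>x. x \<in> carrier E \<Longrightarrow> (x, \<zero>\<^bsub>D\<^esub>) \<in> K \<Longrightarrow> x = \<zero>\<^bsub>E\<^esub>" using triv[OF K nK] by blast
  have trL: "\<And>x. x \<in> carrier E \<Longrightarrow> (x, \<zero>\<^bsub>D\<^esub>) \<in> L \<Longrightarrow> x = \<zero>\<^bsub>E\<^esub>" using triv[OF L nL] by blast
  define A where "A = snd ` (K \<inter> L)"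
  have Asub: "submodule A R D"
    unfolding submodule_iff
  proof (intro conjI ballI)
    show "A \<subseteq> carrier D" using Kp by (auto simp: A_def dsum_carrier)
    show "\<zero>\<^bsub>D\<^esub> \<in> A" using Kp Lp unfolding A_def dsum_zero by (metis IntI image_eqI snd_conv)
  next
    fix a assume "a \<in> A"
    then obtain m where m: "m \<in> K" "m \<in> L" "a = snd m" by (auto simp: A_def)
    have "\<ominus>\<^bsub>dsum E D\<^esub> m \<in> K \<inter> L" using m Kp Lp by auto
    moreover have "snd (\<ominus>\<^bsub>dsum E D\<^esub> m) = \<ominus>\<^bsub>D\<^esub> a" using m Kp dsum_inv'[OF EA, of m] by auto
    ultimately show "\<ominus>\<^bsub>D\<^esub> a \<in> A" unfolding A_def by (metis image_eqI)
  next
    fix a b assume "a \<in> A" "b \<in> A"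
    then obtain m n where m: "m \<in> K" "m \<in> L" "a = snd m" "n \<in> K" "n \<in> L" "b = snd n" by (auto simp: A_def)
    have "m \<oplus>\<^bsub>dsum E D\<^esub> n \<in> K \<inter> L" using m Kp Lp by auto
    moreover have "snd (m \<oplus>\<^bsub>dsum E D\<^esub> n) = a \<oplus>\<^bsub>D\<^esub> b" using m by (simp add: dsum_add')
    ultimately show "a \<oplus>\<^bsub>D\<^esub> b \<in> A" unfolding A_def by (metis image_eqI)
  next
    fix r a assume r: "r \<in> carrier R" and "a \<in> A"
    then obtain m where m: "m \<in> K" "m \<in> L" "a = snd m" by (auto simp: A_def)
    have "r \<odot>\<^bsub>dsum E D\<^esub> m \<in> K \<inter> L" using m r Kp Lp by auto
    moreover have "snd (r \<odot>\<^bsub>dsum E D\<^esub> m) = r \<odot>\<^bsub>D\<^esub> a" using m by (simp add: dsum_smult')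
    ultimately show "r \<odot>\<^bsub>D\<^esub> a \<in> A" unfolding A_def by (metis image_eqI)
  qed
  have decomp: "\<And>x. x \<in> carrier E \<Longrightarrow> \<exists>k\<in>K. \<exists>l\<in>L. (x, \<zero>\<^bsub>D\<^esub>) = k \<oplus>\<^bsub>dsum E D\<^esub> l"
    using cover unfolding submod_sum_def by blast
  define f where "f x = {snd l | l. l \<in> L \<and> (\<exists>k\<in>K. (x, \<zero>\<^bsub>D\<^esub>) = k \<oplus>\<^bsub>dsum E D\<^esub> l)}" for x
  have fcos: "\<And>x k l. k \<in> K \<Longrightarrow> l \<in> L \<Longrightarrow> (x, \<zero>\<^bsub>D\<^esub>) = k \<oplus>\<^bsub>dsum E D\<^esub> l \<Longrightarrow> f x = cos D A (snd l)"
  proof -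
    fix x k l assume k: "k \<in> K" and l: "l \<in> L" and e: "(x, \<zero>\<^bsub>D\<^esub>) = k \<oplus>\<^bsub>dsum E D\<^esub> l"
    have kc: "k \<in> carrier (dsum E D)" and lc: "l \<in> carrier (dsum E D)" using k l Kp Lp by auto
    show "f x = cos D A (snd l)"
    proof (rule Set.set_eqI, rule iffI)
      fix y assume "y \<in> f x"
      then obtain l' k' where l': "l' \<in> L" "k' \<in> K" "(x, \<zero>\<^bsub>D\<^esub>) = k' \<oplus>\<^bsub>dsum E D\<^esub> l'" "y = snd l'"
        unfolding f_def by blast
      have kc': "k' \<in> carrier (dsum E D)" and lc': "l' \<in> carrier (dsum E D)" using l' Kp Lp by auto
      define m where "m = l' \<ominus>\<^bsub>dsum E D\<^esub> l"
      have mL: "m \<in> L" using msub l' l by (simp add: m_def)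
      have "m = k \<ominus>\<^bsub>dsum E D\<^esub> k'"
      proof -
        have "k' \<oplus>\<^bsub>dsum E D\<^esub> l' = k \<oplus>\<^bsub>dsum E D\<^esub> l" using e l' by simp
        thus ?thesis unfolding m_def using kc lc kc' lc'
          by (metis M.add.m_assoc M.minus_closed M.r_neg1 M.r_neg2 M.a_comm a_minus_def M.add.inv_closed M.minus_add M.minus_minus)
      qed
      hence mK: "m \<in> K" using msubK k l' by simp
      have "l' = m \<oplus>\<^bsub>dsum E D\<^esub> l" unfolding m_def using lc lc'
        by (simp add: a_minus_def M.add.m_assoc M.l_neg)
      hence "y = snd m \<oplus>\<^bsub>D\<^esub> snd l" using l' by (simp add: dsum_add')
      moreover have "snd m \<in> A" using mK mL by (auto simp: A_def)
      ultimately show "y \<in> cos D A (snd l)" unfolding cos_def by blast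
    next
      fix y assume "y \<in> cos D A (snd l)"
      then obtain a where a: "a \<in> A" "y = a \<oplus>\<^bsub>D\<^esub> snd l" unfolding cos_def by blast
      then obtain m where m: "m \<in> K" "m \<in> L" "a = snd m" by (auto simp: A_def)
      have mc: "m \<in> carrier (dsum E D)" using m Kp by auto
      have l'L: "m \<oplus>\<^bsub>dsum E D\<^esub> l \<in> L" using m l Lp by auto
      have k'K: "k \<ominus>\<^bsub>dsum E D\<^esub> m \<in> K" using msubK k m by simp
      have "(k \<ominus>\<^bsub>dsum E D\<^esub> m) \<oplus>\<^bsub>dsum E D\<^esub> (m \<oplus>\<^bsub>dsum E D\<^esub> l) = k \<oplus>\<^bsub>dsum E D\<^esub> l"
        using kc lc mc by (simp add: a_minus_def M.add.m_assoc M.r_neg1 M.r_neg2)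
      hence "(x, \<zero>\<^bsub>D\<^esub>) = (k \<ominus>\<^bsub>dsum E D\<^esub> m) \<oplus>\<^bsub>dsum E D\<^esub> (m \<oplus>\<^bsub>dsum E D\<^esub> l)" using e by simp
      moreover have "y = snd (m \<oplus>\<^bsub>dsum E D\<^esub> l)" using a m by (simp add: dsum_add')
      ultimately show "y \<in> f x" unfolding f_def using l'L k'K by blast
    qed
  qed
  have lc_of: "\<And>l. l \<in> L \<Longrightarrow> snd l \<in> carrier D" using Lp by (auto simp: dsum_carrier)
  have fcar: "\<And>x. x \<in> carrier E \<Longrightarrow> f x \<in> carrier (quot_module D A)"
  proof -
    fix x assume x: "x \<in> carrier E"
    obtain k l where kl: "k \<in> K" "l \<in> L" "(x, \<zero>\<^bsub>D\<^esub>) = k \<oplus>\<^bsub>dsum E D\<^esub> l" using decomp[OF x] by blast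
    show "f x \<in> carrier (quot_module D A)" using fcos[OF kl] lc_of[OF kl(2)] by (simp add: quot_carrier)
  qed
  have fadd: "\<And>x y. x \<in> carrier E \<Longrightarrow> y \<in> carrier E \<Longrightarrow>
      f (x \<oplus>\<^bsub>E\<^esub> y) = f x \<oplus>\<^bsub>quot_module D A\<^esub> f y"
  proof -
    fix x y assume x: "x \<in> carrier E" and y: "y \<in> carrier E"
    obtain k l where kl: "k \<in> K" "l \<in> L" "(x, \<zero>\<^bsub>D\<^esub>) = k \<oplus>\<^bsub>dsum E D\<^esub> l" using decomp[OF x] by blast
    obtain k' l' where kl': "k' \<in> K" "l' \<in> L" "(y, \<zero>\<^bsub>D\<^esub>) = k' \<oplus>\<^bsub>dsum E D\<^esub> l'" using decomp[OF y] by blast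
    have c: "k \<in> carrier (dsum E D)" "l \<in> carrier (dsum E D)" "k' \<in> carrier (dsum E D)" "l' \<in> carrier (dsum E D)"
      using kl kl' Kp Lp by auto
    have "(x \<oplus>\<^bsub>E\<^esub> y, \<zero>\<^bsub>D\<^esub>) = (x, \<zero>\<^bsub>D\<^esub>) \<oplus>\<^bsub>dsum E D\<^esub> (y, \<zero>\<^bsub>D\<^esub>)" by (simp add: dsum_add)
    also have "\<dots> = (k \<oplus>\<^bsub>dsum E D\<^esub> k') \<oplus>\<^bsub>dsum E D\<^esub> (l \<oplus>\<^bsub>dsum E D\<^esub> l')"
      using kl kl' c by (simp add: M.a_ac)
    finally have e: "(x \<oplus>\<^bsub>E\<^esub> y, \<zero>\<^bsub>D\<^esub>) = (k \<oplus>\<^bsub>dsum E D\<^esub> k') \<oplus>\<^bsub>dsum E D\<^esub> (l \<oplus>\<^bsub>dsum E D\<^esub> l')" .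
    have "f (x \<oplus>\<^bsub>E\<^esub> y) = cos D A (snd (l \<oplus>\<^bsub>dsum E D\<^esub> l'))"
      by (rule fcos[OF _ _ e]) (use kl kl' Kp Lp in auto)
    also have "\<dots> = cos D A (snd l \<oplus>\<^bsub>D\<^esub> snd l')" by (simp add: dsum_add')
    also have "\<dots> = f x \<oplus>\<^bsub>quot_module D A\<^esub> f y"
      using fcos[OF kl] fcos[OF kl'] D.cos_add[OF Asub lc_of[OF kl(2)] lc_of[OF kl'(2)]]
      by (simp add: quot_add)
    finally show "f (x \<oplus>\<^bsub>E\<^esub> y) = f x \<oplus>\<^bsub>quot_module D A\<^esub> f y" .
  qed
  have fsm: "\<And>r x. r \<in> carrier R \<Longrightarrow> x \<in> carrier E \<Longrightarrow>
      f (r \<odot>\<^bsub>E\<^esub> x) = r \<odot>\<^bsub>quot_module D A\<^esub> f x"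
  proof -
    fix r x assume r: "r \<in> carrier R" and x: "x \<in> carrier E"
    obtain k l where kl: "k \<in> K" "l \<in> L" "(x, \<zero>\<^bsub>D\<^esub>) = k \<oplus>\<^bsub>dsum E D\<^esub> l" using decomp[OF x] by blast
    have c: "fst k \<in> carrier E" "snd k \<in> carrier D" "fst l \<in> carrier E" "snd l \<in> carrier D"
      using kl Kp Lp by (auto simp: dsum_carrier)
    have "(r \<odot>\<^bsub>E\<^esub> x, \<zero>\<^bsub>D\<^esub>) = r \<odot>\<^bsub>dsum E D\<^esub> (x, \<zero>\<^bsub>D\<^esub>)" using r by (simp add: dsum_smult)
    also have "\<dots> = (r \<odot>\<^bsub>dsum E D\<^esub> k) \<oplus>\<^bsub>dsum E D\<^esub> (r \<odot>\<^bsub>dsum E D\<^esub> l)"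
      using kl(3) c r by (simp add: dsum_add' dsum_smult' E.smult_r_distr D.smult_r_distr)
    finally have e: "(r \<odot>\<^bsub>E\<^esub> x, \<zero>\<^bsub>D\<^esub>) = (r \<odot>\<^bsub>dsum E D\<^esub> k) \<oplus>\<^bsub>dsum E D\<^esub> (r \<odot>\<^bsub>dsum E D\<^esub> l)" .
    have "f (r \<odot>\<^bsub>E\<^esub> x) = cos D A (snd (r \<odot>\<^bsub>dsum E D\<^esub> l))"
      by (rule fcos[OF _ _ e]) (use kl r Kp Lp in auto)
    also have "\<dots> = cos D A (r \<odot>\<^bsub>D\<^esub> snd l)" by (simp add: dsum_smult')
    also have "\<dots> = r \<odot>\<^bsub>quot_module D A\<^esub> f x"
      using fcos[OF kl] D.cos_smult[OF Asub c(4) r] by (simp add: quot_smult)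
    finally show "f (r \<odot>\<^bsub>E\<^esub> x) = r \<odot>\<^bsub>quot_module D A\<^esub> f x" .
  qed
  obtain x0 where x0: "x0 \<in> carrier E" "x0 \<noteq> \<zero>\<^bsub>E\<^esub>" using simp1 E.zero_closed by blast
  have fx0: "f x0 \<noteq> \<zero>\<^bsub>quot_module D A\<^esub>"
  proof
    assume h: "f x0 = \<zero>\<^bsub>quot_module D A\<^esub>"
    obtain k l where kl: "k \<in> K" "l \<in> L" "(x0, \<zero>\<^bsub>D\<^esub>) = k \<oplus>\<^bsub>dsum E D\<^esub> l" using decomp[OF x0(1)] by blast
    have lc: "l \<in> carrier (dsum E D)" "k \<in> carrier (dsum E D)" using kl Kp Lp by auto
    have "cos D A (snd l) = cos D A \<zero>\<^bsub>D\<^esub>"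
      using h fcos[OF kl] D.cos_zero[OF Asub] by (simp add: quot_zero)
    hence "\<zero>\<^bsub>D\<^esub> \<ominus>\<^bsub>D\<^esub> snd l \<in> A" using D.cos_eq[OF Asub D.zero_closed lc_of[OF kl(2)]] by simp
    hence "\<ominus>\<^bsub>D\<^esub> snd l \<in> A" using lc_of[OF kl(2)] by (simp add: a_minus_def)
    hence "\<ominus>\<^bsub>D\<^esub> (\<ominus>\<^bsub>D\<^esub> snd l) \<in> A" using Asub by (simp add: submodule_iff)
    hence "snd l \<in> A" using lc_of[OF kl(2)] by (simp add: D.minus_minus)
    then obtain m where m: "m \<in> K" "m \<in> L" "snd l = snd m" by (auto simp: A_def)
    have mc: "m \<in> carrier (dsum E D)" using m Kp by auto
    have dL: "l \<ominus>\<^bsub>dsum E D\<^esub> m \<in> L" using msub kl m by simp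
    have "snd (l \<ominus>\<^bsub>dsum E D\<^esub> m) = \<zero>\<^bsub>D\<^esub>"
      using m lc mc by (simp add: a_minus_def dsum_add' dsum_inv'[OF EA] D.r_neg dsum_carrier mem_Times_iff)
    hence "(fst (l \<ominus>\<^bsub>dsum E D\<^esub> m), \<zero>\<^bsub>D\<^esub>) = l \<ominus>\<^bsub>dsum E D\<^esub> m" by (simp add: prod_eq_iff)
    hence "(fst (l \<ominus>\<^bsub>dsum E D\<^esub> m), \<zero>\<^bsub>D\<^esub>) \<in> L" using dL by simp
    moreover have "l \<ominus>\<^bsub>dsum E D\<^esub> m \<in> carrier (dsum E D)" using lc(1) mc by (rule M.minus_closed)
    hence "fst (l \<ominus>\<^bsub>dsum E D\<^esub> m) \<in> carrier E" by (auto simp: dsum_carrier)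
    ultimately have "fst (l \<ominus>\<^bsub>dsum E D\<^esub> m) = \<zero>\<^bsub>E\<^esub>" using trL by blast
    hence "l \<ominus>\<^bsub>dsum E D\<^esub> m = \<zero>\<^bsub>dsum E D\<^esub>"
      using \<open>snd (l \<ominus>\<^bsub>dsum E D\<^esub> m) = \<zero>\<^bsub>D\<^esub>\<close> by (simp add: dsum_zero prod_eq_iff)
    moreover have "(l \<ominus>\<^bsub>dsum E D\<^esub> m) \<oplus>\<^bsub>dsum E D\<^esub> m = l"
      using lc mc by (simp add: a_minus_def M.add.m_assoc M.l_neg)
    ultimately have "l = m" using mc by simp
    hence "(x0, \<zero>\<^bsub>D\<^esub>) \<in> K" using kl m Kp by auto
    thus False using trK x0 by blast
  qed
  have "lin_hom R E (quot_module D A) f"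
    unfolding lin_hom_def using fcar fadd fsm by (simp add: Pi_iff)
  then show ?thesis unfolding simple_in_sigma_def
    using Asub x0(1) fx0 by blast
qed

end

theorem lemma2p16:
  fixes R :: "('a, 'r) ring_scheme" and E :: "('a, 'b) module" and D :: "('a, 'c) module"
  assumes "ring R" and "simple_module R E" and "left_module R D"
  shows "strongly_hollow R (dsum E D) ((\<lambda>x. (x, \<zero>\<^bsub>D\<^esub>)) ` carrier E)
           \<longleftrightarrow> \<not> simple_in_sigma R D E"
proof -
  have sE: "left_module R E" "carrier E \<noteq> {\<zero>\<^bsub>E\<^esub>}"
     "\<forall>N. submodule N R E \<longrightarrow> N = {\<zero>\<^bsub>E\<^esub>} \<or> N = carrier E"
    using assms(2) by (simp_all add: simple_module_def)
  interpret two R E D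
    unfolding two_def using left_module_lmod[OF sE(1)] left_module_lmod[OF assms(3)] by simp
  show ?thesis
  proof
    assume sh: "strongly_hollow R (dsum E D) ((\<lambda>x. (x, \<zero>\<^bsub>D\<^esub>)) ` carrier E)"
    show "\<not> simple_in_sigma R D E"
    proof
      assume "simple_in_sigma R D E"
      then obtain A f x where "submodule A R D" "lin_hom R E (quot_module D A) f"
        "x \<in> carrier E" "f x \<noteq> \<zero>\<^bsub>quot_module D A\<^esub>"
        unfolding simple_in_sigma_def by blast
      then show False using sigma_not_sh[of A f x] sh by (simp add: quot_zero)
    qed
  next
    assume "\<not> simple_in_sigma R D E"
    then show "strongly_hollow R (dsum E D) ((\<lambda>x. (x, \<zero>\<^bsub>D\<^esub>)) ` carrier E)"
      using not_sh_sigma[OF sE(2) sE(3)] by blast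
  qed
qed

end
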